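(* Let $B$ be a regular ROBP of length $n$ and width $w$, where $n\ge 2$ is a power of $2$, with random walk matrices $\mathbf{M}_{\ell..r}$ and weights $W(\ell,r,y)$ as defined in the context. Let $W^*=w^2$, let $0<\gamma<1/2$, and let $\varepsilon^{(i)}=\frac{\gamma^{i+1}}{10(i+1)^2\log(n)}$ for integers $i\ge 0$. Let $\delta=\varepsilon^{(0)}/(3W^* )$ and let $G_0:\{0,1\}^{d_0}\to\{0,1\}^n$ be any function such that for every $0\le \ell<r\le n$ and every $y\in\mathbb{R}^w$, $$\Big\|\Big(\mathbb{E}_{s\sim\{0,1\}^{d_0}}\big[\mathbf{M}_{\ell..r}(G_0(s)_{[\le r-\ell]})\big]-\mathbf{M}_{\ell..r}\Big)y\Big\|_\infty\le \delta\, W(\ell,r,y).$$ For $(\ell,r)\in\mathsf{BS}_n$ with $r-\ell\ge 2$ define $\mathbf{M}^{(0)}_{\ell..r}=\mathbb{E}_{s\sim\{0,1\}^{d_0}}[\mathbf{M}_{\ell..r}(G_0(s)_{[\le r-\ell]})]$, and define $\mathbf{M}^{(k)}_{\ell..r}$ for all $k\ge 0$ and $(\ell,r)\in\mathsf{BS}_n$ by the recursion in the context. Then for every integer $k\ge 0$ and every $(\ell,r)\in\mathsf{BS}_n$, $\mathbf{M}^{(k)}_{\ell..r}$ is a $C_t\varepsilon^{(k)}$-weight approximation of $\mathbf{M}_{\ell..r}$, where $t=\log(r-\ell)$ and $C_t=(1+1/\log(n))^t/3$; that is, for every $y\in\mathbb{R}^w$, $$\big\|(\mathbf{M}^{(k)}_{\ell..r}-\mathbf{M}_{\ell..r})y\big\|_\infty\le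 C_t\varepsilon^{(k)}\cdot\frac{W(\ell,r,y)}{W^*}.$$
   Context: All logarithms are base $2$. A read-once branching program (ROBP) of length $n$ and width $w$ is given by transition functions $B_i:[w]\times\{0,1\}\to[w]$ for $i\in[n]$ (plus a start state and accept states, irrelevant here). It is regular if for every $i$, every $v\in[w]$ has exactly two preimages $(u,b)$ under $B_i$. For $b\in\{0,1\}$, $\mathbf{M}_i(b)\in\mathbb{R}^{w\times w}$ has $\mathbf{M}_i(b)[u,v]=1$ if $B_i(u,b)=v$ and $0$ otherwise; $\mathbf{M}_i=\frac12(\mathbf{M}_i(0)+\mathbf{M}_i(1))$. For $0\le\ell<r\le n$, $\mathbf{M}_{\ell..r}=\prod_{i=\ell+1}^r\mathbf{M}_i$ and $\mathbf{M}_{\ell..r}(s)=\prod_{i=1}^{r-\ell}\mathbf{M}_{\ell+i}(s_i)$ for $s\in\{0,1\}^{r-\ell}$; $\mathbf{M}_{r..r}$ is the identity. For a string $x$, $x_{[\le j]}$ is its length-$j$ prefix. Weight: for $y\in\mathbb{R}^w$ and $i\in[n]$, $W(i,y)=\sum_{u\in[w]}\sum_{b\in\{0,1\}}|(\mathbf{M}_iy)[u]-y[B_i(u,b)]|$, and $W(\ell,r,y)=\sum_{i=\ell+1}^r W(i,\mathbf{M}_{i..r}y)$. $\mathsf{BS}_n=\{(\ell,r):\exists i,k\ge 0,\ \ell=i2^k,\ r=\ell+2^k,\ 0\le\ell<r\le n\}$. Recursion: for $(\ell,r)\in\mathsf{BS}_n$ with $r-\ell=1$, $\mathbf{M}^{(k)}_{\ell..r}=\mathbf{M}_r$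 for all $k\ge0$; for $r-\ell\ge2$ and $k\ge1$, with $m=(\ell+r)/2$, $$\mathbf{M}^{(k)}_{\ell..r}=\sum_{i+j=k}\mathbf{M}^{(i)}_{\ell..m}\mathbf{M}^{(j)}_{m..r}-\sum_{i+j=k-1}\mathbf{M}^{(i)}_{\ell..m}\mathbf{M}^{(j)}_{m..r}$$ (sums over integers $i,j\ge0$). For $\varepsilon_0\ge0$, a matrix $\widetilde{\mathbf{M}}$ is an $\varepsilon_0$-weight approximation of $\mathbf{M}_{\ell..r}$ if $\|(\widetilde{\mathbf{M}}-\mathbf{M}_{\ell..r})y\|_\infty\le\varepsilon_0 W(\ell,r,y)/W^*$ for all $y\in\mathbb{R}^w$. *)

theory Defs
  imports Complex_Main
begin

type_synonym mat = "nat \<Rightarrow> nat \<Rightarrow> real"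

text \<open>Width-w matrices are functions on indices; only entries with indices < w matter.
  States are [w] = {0..<w}. The ROBP transitions are B i u b for layers i in {1..n}.\<close>

definition mat_mult :: "nat \<Rightarrow> mat \<Rightarrow> mat \<Rightarrow> mat" where
  "mat_mult w A C = (\<lambda>u v. \<Sum>k<w. A u k * C k v)"

definition mat_vec :: "nat \<Rightarrow> mat \<Rightarrow> (nat \<Rightarrow> real) \<Rightarrow> (nat \<Rightarrow> real)" where
  "mat_vec w A y = (\<lambda>u. \<Sum>v<w. A u v * y v)"

definition idm :: mat where
  "idm = (\<lambda>u v. if u = v then 1 else 0)"

definition inf_norm :: "nat \<Rightarrow> (nat \<Rightarrow> real) \<Rightarrow> real" where
  "inf_norm w x = Max ((\<lambda>u. \<bar>x u\<bar>) ` {..<w})"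

definition regular_robp :: "nat \<Rightarrow> nat \<Rightarrow> (nat \<Rightarrow> nat \<Rightarrow> bool \<Rightarrow> nat) \<Rightarrow> bool" where
  "regular_robp n w B \<longleftrightarrow> (\<forall>i\<in>{1..n}. (\<forall>u<w. \<forall>b. B i u b < w) \<and>
      (\<forall>v<w. card {(u, b). u < w \<and> B i u b = v} = 2))"

definition step_mat :: "(nat \<Rightarrow> nat \<Rightarrow> bool \<Rightarrow> nat) \<Rightarrow> nat \<Rightarrow> bool \<Rightarrow> mat" where
  "step_mat B i b = (\<lambda>u v. if B i u b = v then 1 else 0)"

definition walk_mat :: "(nat \<Rightarrow> nat \<Rightarrow> bool \<Rightarrow> nat) \<Rightarrow> nat \<Rightarrow> mat" where
  "walk_mat B i = (\<lambda>u v. (step_mat B i False u v + step_mat B i True u v) / 2)"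

definition range_mat :: "nat \<Rightarrow> (nat \<Rightarrow> nat \<Rightarrow> bool \<Rightarrow> nat) \<Rightarrow> nat \<Rightarrow> nat \<Rightarrow> mat" where
  "range_mat w B l r = foldl (\<lambda>A i. mat_mult w A (walk_mat B i)) idm [Suc l..<Suc r]"

definition str_mat :: "nat \<Rightarrow> (nat \<Rightarrow> nat \<Rightarrow> bool \<Rightarrow> nat) \<Rightarrow> nat \<Rightarrow> bool list \<Rightarrow> mat" where
  "str_mat w B l s = foldl (\<lambda>A i. mat_mult w A (step_mat B (l + i) (s ! (i - 1)))) idm [1..<Suc (length s)]"

definition weight1 :: "nat \<Rightarrow> (nat \<Rightarrow> nat \<Rightarrow> bool \<Rightarrow> nat) \<Rightarrow> nat \<Rightarrow> (nat \<Rightarrow> real) \<Rightarrow> real" where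
  "weight1 w B i y = (\<Sum>u<w. \<Sum>b\<in>(UNIV::bool set). \<bar>mat_vec w (walk_mat B i) y u - y (B i u b)\<bar>)"

definition weight :: "nat \<Rightarrow> (nat \<Rightarrow> nat \<Rightarrow> bool \<Rightarrow> nat) \<Rightarrow> nat \<Rightarrow> nat \<Rightarrow> (nat \<Rightarrow> real) \<Rightarrow> real" where
  "weight w B l r y = (\<Sum>i\<in>{Suc l..r}. weight1 w B i (mat_vec w (range_mat w B i r) y))"

definition in_BS :: "nat \<Rightarrow> nat \<Rightarrow> nat \<Rightarrow> bool" where
  "in_BS n l r \<longleftrightarrow> (\<exists>i k. l = i * 2 ^ k \<and> r = l + 2 ^ k \<and> r \<le> n)"

definition seed_avg :: "nat \<Rightarrow> (nat \<Rightarrow> nat \<Rightarrow> bool \<Rightarrow> nat) \<Rightarrow> nat \<Rightarrow> (bool list \<Rightarrow> bool list) \<Rightarrow> nat \<Rightarrow> nat \<Rightarrow> mat" where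
  "seed_avg w B d0 G0 l r = (\<lambda>u v. (\<Sum>s\<in>{s. length s = d0}. str_mat w B l (take (r - l) (G0 s)) u v) / 2 ^ d0)"

text \<open>The recursion M^(k)_{l..r}; Mbase l r plays the role of M^(0)_{l..r} for r - l >= 2.\<close>
function Mrec :: "nat \<Rightarrow> (nat \<Rightarrow> nat \<Rightarrow> bool \<Rightarrow> nat) \<Rightarrow> (nat \<Rightarrow> nat \<Rightarrow> mat) \<Rightarrow> nat \<Rightarrow> nat \<Rightarrow> nat \<Rightarrow> mat" where
  "Mrec w B Mbase k l r =
     (if r - l \<le> 1 then walk_mat B r
      else if k = 0 then Mbase l r
      else (\<lambda>u v.
        (\<Sum>i\<in>{0..k}. mat_mult w (Mrec w B Mbase i l ((l + r) div 2)) (Mrec w B Mbase (k - i) ((l + r) div 2) r) u v)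
      - (\<Sum>i\<in>{0..k - 1}. mat_mult w (Mrec w B Mbase i l ((l + r) div 2)) (Mrec w B Mbase (k - 1 - i) ((l + r) div 2) r) u v)))"
  by pat_completeness auto
termination
  by (relation "measure (\<lambda>(w, B, Mb, k, l, r). r - l)") auto

end

theory Submission
  imports Defs
begin


declare Mrec.simps[simp del]

lemma mat_vec_mult: "mat_vec w (mat_mult w A C) y = mat_vec w A (mat_vec w C y)"
  unfolding mat_vec_def mat_mult_def
  apply (rule ext)
  apply (simp add: sum_distrib_left sum_distrib_right mult.assoc)
  apply (rule sum.swap)
  done

lemma mat_vec_cong: "(\<And>v. v < w \<Longrightarrow> y v = z v) \<Longrightarrow> mat_vec w A y = mat_vec w A z"
  unfolding mat_vec_def by (auto intro!: ext sum.cong)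

lemma mat_vec_idm: "mat_vec w idm y u = (if u < w then y u else 0)"
proof -
  have e: "\<And>v. idm u v * y v = (if u = v then y v else 0)" by (auto simp: idm_def)
  show ?thesis unfolding mat_vec_def e by simp
qed

lemma mat_vec_diff: "mat_vec w (\<lambda>u v. X u v - Y u v) y u = mat_vec w X y u - mat_vec w Y y u"
  unfolding mat_vec_def by (simp add: left_diff_distrib sum_subtractf)

lemma mat_vec_add_vec: "mat_vec w A (\<lambda>v. x v + z v) u = mat_vec w A x u + mat_vec w A z u"
  unfolding mat_vec_def by (simp add: distrib_left sum.distrib)

lemma range_mat_same: "range_mat w B l l = idm"
  unfolding range_mat_def by simp

lemma range_mat_Suc: "l \<le> r \<Longrightarrow> range_mat w B l (Suc r) = mat_mult w (range_mat w B l r) (walk_mat B (Suc r))"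
  unfolding range_mat_def by (simp add: upt_Suc_append)

lemma range_comp: assumes "l \<le> m" "m \<le> r" shows
  "mat_vec w (range_mat w B l r) y = mat_vec w (range_mat w B l m) (mat_vec w (range_mat w B m r) y)"
  using assms(2)
proof (induction r arbitrary: y rule: dec_induct)
  case base
  then show ?case by (auto simp: range_mat_same mat_vec_idm intro!: mat_vec_cong)
next
  case (step q)
  then have "l \<le> q" "m \<le> q" using assms(1) by auto
  then show ?case using step by (simp add: range_mat_Suc mat_vec_mult)
qed

lemma range_one: "mat_vec w (range_mat w B l (Suc l)) y u = (if u < w then mat_vec w (walk_mat B (Suc l)) y u else 0)"
  by (simp add: range_mat_Suc range_mat_same mat_vec_mult mat_vec_idm)

lemma reg_lt: "regular_robp n w B \<Longrightarrow> i \<in> {1..n} \<Longrightarrow> u < w \<Longrightarrow> B i u b < w"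
  unfolding regular_robp_def by blast

lemma walk_apply: "regular_robp n w B \<Longrightarrow> i \<in> {1..n} \<Longrightarrow> u < w \<Longrightarrow>
   mat_vec w (walk_mat B i) z u = (z (B i u False) + z (B i u True)) / 2"
proof -
  assume a: "regular_robp n w B" "i \<in> {1..n}" "u < w"
  have lt: "B i u b < w" for b using reg_lt[OF a] .
  have e: "(\<lambda>v. walk_mat B i u v * z v) = (\<lambda>v. (if B i u False = v then z v else 0)/2 + (if B i u True = v then z v else 0)/2)"
    by (auto simp: walk_mat_def step_mat_def)
  have "mat_vec w (walk_mat B i) z u = (\<Sum>v<w. (if B i u False = v then z v else 0))/2 + (\<Sum>v<w. (if B i u True = v then z v else 0))/2"
    unfolding mat_vec_def e by (simp add: sum.distrib sum_divide_distrib[symmetric])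
  also have "\<dots> = (z (B i u False) + z (B i u True)) / 2"
    using lt by (simp add: add_divide_distrib)
  finally show ?thesis .
qed



definition psi :: "nat \<Rightarrow> (nat \<Rightarrow> real) \<Rightarrow> real" where
  "psi w z = (\<Sum>u<w. \<Sum>v<w. \<bar>z u - z v\<bar>)"

definition Wab :: "nat \<Rightarrow> (nat \<Rightarrow> nat) \<Rightarrow> (nat \<Rightarrow> nat) \<Rightarrow> (nat \<Rightarrow> real) \<Rightarrow> real" where
  "Wab w a b z = (\<Sum>u<w. \<bar>z (a u) - z (b u)\<bar>)"

definition PM :: "nat \<Rightarrow> (nat \<Rightarrow> nat) \<Rightarrow> (nat \<Rightarrow> nat) \<Rightarrow> (nat \<Rightarrow> real) \<Rightarrow> real" where
  "PM w a b z = (\<Sum>u<w. \<Sum>u'<w. \<bar>(z (a u) + z (b u)) / 2 - (z (a u') + z (b u')) / 2\<bar>)"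

context
  fixes w :: nat and a b :: "nat \<Rightarrow> nat"
  assumes ab_lt: "\<And>u. u < w \<Longrightarrow> a u < w \<and> b u < w"
    and ab_reg: "\<And>g. (\<Sum>u<w. g (a u) + g (b u)) = 2 * (\<Sum>v<w. g v :: real)"
begin

lemma count3:
  fixes G :: "real \<Rightarrow> real"
  assumes "\<And>u. u < w \<Longrightarrow> c u \<in> {0,1,2::real}"
  shows "(\<Sum>u<w. G (c u)) = (\<Sum>u<w. if c u = 0 then 1 else 0) * G 0
     + (\<Sum>u<w. if c u = 1 then 1 else 0) * G 1 + (\<Sum>u<w. if c u = 2 then 1 else 0) * G 2"
proof -
  have "(\<Sum>u<w. G (c u)) = (\<Sum>u<w. (if c u = 0 then 1 else 0) * G 0
     + (if c u = 1 then 1 else 0) * G 1 + (if c u = 2 then 1 else 0) * G 2)"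
    using assms by (intro sum.cong) auto
  then show ?thesis
    by (simp add: sum.distrib sum_distrib_right)
qed

lemma indicator_case:
  assumes f01: "\<And>v. v < w \<Longrightarrow> f v \<in> {0, 1::real}"
  shows "Wab w a b f + PM w a b f \<le> psi w f"
proof -
  define c where "c u = f (a u) + f (b u)" for u
  have c3: "c u \<in> {0,1,2}" if "u < w" for u
    using f01[of "a u"] f01[of "b u"] ab_lt[OF that] by (auto simp: c_def)
  define N0 where "N0 = (\<Sum>u<w. if c u = 0 then 1 else (0::real))"
  define N1 where "N1 = (\<Sum>u<w. if c u = 1 then 1 else (0::real))"
  define N2 where "N2 = (\<Sum>u<w. if c u = 2 then 1 else (0::real))"
  note cnt = count3[of c, OF c3, folded N0_def N1_def N2_def]
  define s where "s = (\<Sum>v<w. f v)"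
  have W: "Wab w a b f = N1"
  proof -
    have "Wab w a b f = (\<Sum>u<w. c u * (2 - c u))"
      unfolding Wab_def
      apply (intro sum.cong refl)
      subgoal for u using f01[of "a u"] f01[of "b u"] ab_lt[of u] by (auto simp: c_def)
      done
    also have "\<dots> = N1" using cnt[of "\<lambda>x. x * (2 - x)"] by simp
    finally show ?thesis .
  qed
  have P: "PM w a b f = N0 * N1 + 2 * N0 * N2 + N1 * N2"
  proof -
    have "PM w a b f = (\<Sum>u<w. \<Sum>u'<w. \<bar>c u - c u'\<bar> / 2)"
      unfolding PM_def c_def by (intro sum.cong refl) (simp add: diff_divide_distrib[symmetric])
    also have "\<dots> = (\<Sum>u<w. N0 * \<bar>c u\<bar> / 2 + N1 * \<bar>c u - 1\<bar> / 2 + N2 * \<bar>c u - 2\<bar> / 2)"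
    proof (intro sum.cong refl)
      fix x
      show "(\<Sum>u'<w. \<bar>c x - c u'\<bar> / 2) = N0 * \<bar>c x\<bar> / 2 + N1 * \<bar>c x - 1\<bar> / 2 + N2 * \<bar>c x - 2\<bar> / 2"
        using cnt[of "\<lambda>y. \<bar>c x - y\<bar> / 2"] by simp
    qed
    also have "\<dots> = N0 * N1 + 2 * N0 * N2 + N1 * N2"
      using cnt[of "\<lambda>x. N0 * \<bar>x\<bar> / 2 + N1 * \<bar>x - 1\<bar> / 2 + N2 * \<bar>x - 2\<bar> / 2"]
      by (simp add: algebra_simps)
    finally show ?thesis .
  qed
  have S: "psi w f = 2 * real w * s - 2 * s * s"
  proof -
    have "psi w f = (\<Sum>u<w. \<Sum>v<w. f u + f v - 2 * f u * f v)"
      unfolding psi_def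
      apply (intro sum.cong refl)
      subgoal for u v using f01[of u] f01[of v] by auto
      done
    also have "\<dots> = 2 * real w * s - 2 * s * s"
      by (simp add: s_def sum.distrib sum_subtractf sum_distrib_left sum_distrib_right algebra_simps)
    finally show ?thesis .
  qed
  have cs: "N1 + 2 * N2 = 2 * s"
  proof -
    have "(\<Sum>u<w. c u) = 2 * s" unfolding c_def s_def by (rule ab_reg)
    then show ?thesis using cnt[of "\<lambda>x. x"] by simp
  qed
  have wN: "real w = N0 + N1 + N2" using cnt[of "\<lambda>x. 1"] by simp
  have sI: "s \<in> \<int>" unfolding s_def
  proof (intro Ints_sum)
    fix v assume "v \<in> {..<w}"
    then have "f v = 0 \<or> f v = 1" using f01[of v] by auto
    then show "f v \<in> \<int>" by auto
  qed
  have N2I: "N2 \<in> \<int>" unfolding N2_def by (intro Ints_sum) auto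
  have N1nn: "N1 \<ge> 0" unfolding N1_def by (intro sum_nonneg) auto
  obtain k where k: "s - N2 = of_int k" using sI N2I by (metis Ints_cases Ints_diff)
  have N1k: "N1 = 2 * of_int k" using cs k by simp
  have k0: "k \<ge> 0" using N1nn N1k by simp
  have "psi w f - Wab w a b f - PM w a b f = 2 * of_int k * of_int k - 2 * of_int k"
    unfolding S W P wN using N1k k by (simp add: algebra_simps)
  moreover have "(2::real) * of_int k * of_int k - 2 * of_int k \<ge> 0"
  proof -
    have "k = 0 \<or> k \<ge> 1" using k0 by auto
    then show ?thesis
    proof
      assume "k \<ge> 1"
      then have "(of_int k::real) \<ge> 1" by simp
      then show ?thesis by (simp add: mult_right_mono algebra_simps)
    qed simp
  qed
  ultimately show ?thesis by simp
qed

lemma key_card: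
  "card (z ` {..<w}) \<le> N \<Longrightarrow> Wab w a b z + PM w a b z \<le> psi w z"
proof (induction N arbitrary: z)
  case 0
  then have "w = 0" by auto
  then show ?case unfolding Wab_def PM_def psi_def by simp
next
  case (Suc N)
  define V where "V = z ` {..<w}"
  have finV: "finite V" unfolding V_def by simp
  show ?case
  proof (cases "card V \<le> 1")
    case True
    then have all: "\<forall>a1\<in>V. \<forall>a2\<in>V. a1 = a2"
      using card_le_Suc0_iff_eq[OF finV] by simp
    have eq: "z x = z y" if "x < w" "y < w" for x y
    proof -
      have "z x \<in> V" "z y \<in> V" using that unfolding V_def by auto
      then show ?thesis using all by blast
    qed
    have "Wab w a b z = 0" unfolding Wab_def
    proof (rule sum.neutral, rule ballI)
      fix u assume "u \<in> {..<w}"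
      then have "z (a u) = z (b u)" using eq ab_lt by (metis lessThan_iff)
      then show "\<bar>z (a u) - z (b u)\<bar> = 0" by simp
    qed
    moreover have "PM w a b z = 0" unfolding PM_def
    proof (intro sum.neutral ballI)
      fix u u' assume "u \<in> {..<w}" "u' \<in> {..<w}"
      then have "z (a u) = z (a u')" "z (b u) = z (b u')" using eq ab_lt by (metis lessThan_iff)+
      then show "\<bar>(z (a u) + z (b u)) / 2 - (z (a u') + z (b u')) / 2\<bar> = 0" by simp
    qed
    moreover have "psi w z \<ge> 0" unfolding psi_def by (intro sum_nonneg) auto
    ultimately show ?thesis by simp
  next
    case False
    define \<mu> where "\<mu> = Max V"
    define V' where "V' = V - {\<mu>}"
    have muV: "\<mu> \<in> V" unfolding \<mu>_def using False finV
      by (intro Max_in) auto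
    have cV': "card V' = card V - 1" unfolding V'_def using muV finV by simp
    have V'ne: "V' \<noteq> {}" using cV' False by auto
    have finV': "finite V'" unfolding V'_def using finV by simp
    define \<mu>' where "\<mu>' = Max V'"
    have mu'V': "\<mu>' \<in> V'" unfolding \<mu>'_def using finV' V'ne by (rule Max_in)
    have le_mu: "x \<le> \<mu>" if "x \<in> V" for x unfolding \<mu>_def using finV that by simp
    have le_mu': "x \<le> \<mu>'" if "x \<in> V'" for x unfolding \<mu>'_def using finV' that by simp
    have lt: "\<mu>' < \<mu>" using mu'V' le_mu unfolding V'_def by force
    define lam where "lam = \<mu> - \<mu>'"
    have lam_pos: "lam > 0" using lt unfolding lam_def by simp
    define z' where "z' v = min (z v) \<mu>'" for v
    define f where "f v = (if \<mu>' < z v then 1 else (0::real))" for v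
    have top: "z v = \<mu>" if "v < w" "\<mu>' < z v" for v
    proof -
      have "z v \<in> V" using that unfolding V_def by auto
      moreover have "z v \<notin> V'" using le_mu' that by force
      ultimately show ?thesis unfolding V'_def by auto
    qed
    have decomp: "\<bar>z x - z y\<bar> = \<bar>z' x - z' y\<bar> + lam * \<bar>f x - f y\<bar>"
      if "x < w" "y < w" for x y
      using top[OF that(1)] top[OF that(2)] lt unfolding z'_def f_def lam_def
      by (auto simp: min_def)
    have zsplit: "z x = z' x + lam * f x" if "x < w" for x
      using top[OF that] unfolding z'_def f_def lam_def by (auto simp: min_def)
    have img: "z' ` {..<w} \<subseteq> V'"
    proof
      fix t assume "t \<in> z' ` {..<w}"
      then obtain v where v: "v < w" "t = z' v" by auto
      show "t \<in> V'"
      proof (cases "\<mu>' < z v")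
        case True then show ?thesis using v mu'V' unfolding z'_def by simp
      next
        case False
        then have "z v \<noteq> \<mu>" using lt by auto
        then show ?thesis using v False unfolding z'_def V'_def V_def by auto
      qed
    qed
    have "card (z' ` {..<w}) \<le> N"
      using card_mono[OF finV' img] cV' Suc.prems unfolding V_def by simp
    then have IH: "Wab w a b z' + PM w a b z' \<le> psi w z'" by (rule Suc.IH)
    have f01: "f v \<in> {0,1}" for v unfolding f_def by simp
    have IF: "Wab w a b f + PM w a b f \<le> psi w f" by (rule indicator_case) (simp add: f_def)
    have psi_eq: "psi w z = psi w z' + lam * psi w f"
      unfolding psi_def using decomp by (simp add: sum.distrib sum_distrib_left)
    have W_eq: "Wab w a b z = Wab w a b z' + lam * Wab w a b f"
      unfolding Wab_def using decomp ab_lt by (simp add: sum.distrib sum_distrib_left)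
    have PM_le: "PM w a b z \<le> PM w a b z' + lam * PM w a b f"
      unfolding PM_def sum_distrib_left sum.distrib[symmetric]
    proof (intro sum_mono)
      fix u u' assume "u \<in> {..<w}" "u' \<in> {..<w}"
      then have l: "a u < w" "b u < w" "a u' < w" "b u' < w" using ab_lt by auto
      have "(z (a u) + z (b u)) / 2 - (z (a u') + z (b u')) / 2
        = ((z' (a u) + z' (b u)) / 2 - (z' (a u') + z' (b u')) / 2)
          + lam * ((f (a u) + f (b u)) / 2 - (f (a u') + f (b u')) / 2)"
        using zsplit l by (simp add: field_simps)
      then show "\<bar>(z (a u) + z (b u)) / 2 - (z (a u') + z (b u')) / 2\<bar>
        \<le> \<bar>(z' (a u) + z' (b u)) / 2 - (z' (a u') + z' (b u')) / 2\<bar> +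
           lam * \<bar>(f (a u) + f (b u)) / 2 - (f (a u') + f (b u')) / 2\<bar>"
        using lam_pos by (simp add: abs_triangle_ineq[THEN order_trans] abs_mult)
    qed
    have "lam * (Wab w a b f + PM w a b f) \<le> lam * psi w f" using IF lam_pos by (simp add: mult_left_mono)
    then show ?thesis using IH psi_eq W_eq PM_le by (simp add: algebra_simps)
  qed
qed

lemma key: "Wab w a b z + PM w a b z \<le> psi w z"
  by (rule key_card[OF order_refl])

end


lemma inf_norm_ge: "0 < w \<Longrightarrow> u < w \<Longrightarrow> \<bar>x u\<bar> \<le> inf_norm w x"
  unfolding inf_norm_def by (intro Max_ge) auto

lemma inf_norm_le: "0 < w \<Longrightarrow> (\<And>u. u < w \<Longrightarrow> \<bar>x u\<bar> \<le> c) \<Longrightarrow> inf_norm w x \<le> c"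
  unfolding inf_norm_def by (subst Max_le_iff) auto

lemma inf_norm_nonneg: "0 < w \<Longrightarrow> 0 \<le> inf_norm w x"
  using inf_norm_ge[of w 0 x] by linarith

lemma psi_cong: "(\<And>u. u < w \<Longrightarrow> x u = y u) \<Longrightarrow> psi w x = psi w y"
  unfolding psi_def by (intro sum.cong) auto

lemma psi_nonneg: "0 \<le> psi w x"
  unfolding psi_def by (intro sum_nonneg) auto

lemma psi_le: assumes "0 < w" shows "psi w y \<le> real (w^2) * inf_norm w y"
proof -
  define N where "N = inf_norm w y"
  have yb: "\<bar>y u\<bar> \<le> N" if "u < w" for u using inf_norm_ge[OF assms that] N_def by simp
  have N0: "N \<ge> 0" using inf_norm_nonneg[OF assms] N_def by simp
  have pt: "N * \<bar>y u - y v\<bar> \<le> N * N - y u * y v" if "u < w" "v < w" for u v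
  proof (cases "y v \<le> y u")
    case True
    have "(N - y u) * (N + y v) \<ge> 0" using yb[OF that(1)] yb[OF that(2)] by (intro mult_nonneg_nonneg) auto
    then show ?thesis using True by (simp add: algebra_simps)
  next
    case False
    have "(N - y v) * (N + y u) \<ge> 0" using yb[OF that(1)] yb[OF that(2)] by (intro mult_nonneg_nonneg) auto
    then show ?thesis using False by (simp add: algebra_simps)
  qed
  have "N * psi w y = (\<Sum>u<w. \<Sum>v<w. N * \<bar>y u - y v\<bar>)"
    unfolding psi_def by (simp add: sum_distrib_left)
  also have "\<dots> \<le> (\<Sum>u<w. \<Sum>v<w. N * N - y u * y v)"
    using pt by (intro sum_mono) auto
  also have "\<dots> = real w * real w * N * N - (\<Sum>u<w. y u) * (\<Sum>v<w. y v)"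
    by (simp add: sum_subtractf sum_product)
  also have "\<dots> \<le> real w * real w * N * N" by simp
  finally have *: "N * psi w y \<le> N * (real (w^2) * N)" by (simp add: power2_eq_square algebra_simps)
  show ?thesis
  proof (cases "N = 0")
    case True
    then have "\<And>u. u < w \<Longrightarrow> y u = 0" using yb by fastforce
    then have "psi w y = 0" unfolding psi_def by simp
    then show ?thesis using True N_def by simp
  next
    case False
    then have "N > 0" using N0 by simp
    then show ?thesis using * N_def by simp
  qed
qed

context
  fixes n w :: nat and B :: "nat \<Rightarrow> nat \<Rightarrow> bool \<Rightarrow> nat"
  assumes reg: "regular_robp n w B"
begin

lemma reg_card: "i \<in> {1..n} \<Longrightarrow> v < w \<Longrightarrow> card {(u, b). u < w \<and> B i u b = v} = 2"
  using reg unfolding regular_robp_def by blast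

lemma reg_sum: assumes i: "i \<in> {1..n}"
  shows "(\<Sum>u<w. g (B i u False) + g (B i u True)) = 2 * (\<Sum>v<w. g v :: real)"
proof -
  define S where "S = ({..<w} \<times> (UNIV :: bool set))"
  define h where "h p = B i (fst p) (snd p)" for p
  have "(\<Sum>u<w. g (B i u False) + g (B i u True)) = (\<Sum>u<w. \<Sum>b\<in>UNIV. g (B i u b))"
    by (simp add: UNIV_bool add.commute)
  also have "\<dots> = (\<Sum>p\<in>S. g (h p))"
    unfolding S_def h_def by (simp add: sum.cartesian_product case_prod_beta)
  also have "\<dots> = (\<Sum>v<w. \<Sum>p\<in>{p\<in>S. h p = v}. g (h p))"
    by (rule sum.group[symmetric]) (auto simp: S_def h_def reg_lt[OF reg i])
  also have "\<dots> = (\<Sum>v<w. 2 * g v)"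
  proof (intro sum.cong refl)
    fix v assume v: "v \<in> {..<w}"
    have "{p\<in>S. h p = v} = {(u, b). u < w \<and> B i u b = v}" unfolding S_def h_def by auto
    then have "card {p\<in>S. h p = v} = 2" using reg_card[OF i] v by simp
    then show "(\<Sum>p\<in>{p\<in>S. h p = v}. g (h p)) = 2 * g v" by simp
  qed
  finally show ?thesis by (simp add: sum_distrib_left)
qed

lemma weight1_eq: assumes i: "i \<in> {1..n}"
  shows "weight1 w B i z = (\<Sum>u<w. \<bar>z (B i u False) - z (B i u True)\<bar>)"
  unfolding weight1_def
proof (intro sum.cong refl)
  fix u assume "u \<in> {..<w}"
  then have "mat_vec w (walk_mat B i) z u = (z (B i u False) + z (B i u True)) / 2"
    using walk_apply[OF reg i] by simp
  then show "(\<Sum>b\<in>UNIV. \<bar>mat_vec w (walk_mat B i) z u - z (B i u b)\<bar>) = \<bar>z (B i u False) - z (B i u True)\<bar>"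
    by (simp add: UNIV_bool abs_if field_simps)
qed

lemma weight1_le: assumes i: "i \<in> {1..n}"
  shows "weight1 w B i z \<le> psi w z - psi w (mat_vec w (walk_mat B i) z)"
proof -
  have k: "Wab w (\<lambda>u. B i u False) (\<lambda>u. B i u True) z + PM w (\<lambda>u. B i u False) (\<lambda>u. B i u True) z \<le> psi w z"
    by (rule key) (auto simp: reg_lt[OF reg i] reg_sum[OF i])
  have "PM w (\<lambda>u. B i u False) (\<lambda>u. B i u True) z = psi w (mat_vec w (walk_mat B i) z)"
    unfolding PM_def psi_def
    by (intro sum.cong refl) (simp add: walk_apply[OF reg i])
  moreover have "Wab w (\<lambda>u. B i u False) (\<lambda>u. B i u True) z = weight1 w B i z"
    unfolding Wab_def weight1_eq[OF i] by simp
  ultimately show ?thesis using k by simp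
qed


lemma weight_nonneg: "0 \<le> weight w B l r y"
  unfolding weight_def weight1_def by (intro sum_nonneg) auto

lemma weight_le_psi: assumes "l \<le> r" "r \<le> n" shows "weight w B l r y \<le> psi w y"
proof -
  define zz where "zz i = mat_vec w (range_mat w B i r) y" for i
  have step: "weight1 w B i (zz i) \<le> psi w (zz i) - psi w (zz (i - 1))" if i: "i \<in> {Suc l..r}" for i
  proof -
    have i1: "i \<in> {1..n}" using i assms by auto
    have "zz (i - 1) = mat_vec w (range_mat w B (i - 1) i) (zz i)"
      unfolding zz_def using i by (intro range_comp) auto
    then have "psi w (zz (i - 1)) = psi w (mat_vec w (walk_mat B i) (zz i))"
      using i range_one[of w B "i - 1" "zz i"] by (intro psi_cong) auto
    then show ?thesis using weight1_le[OF i1, of "zz i"] by simp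
  qed
  have "weight w B l r y = (\<Sum>i\<in>{Suc l..r}. weight1 w B i (zz i))"
    unfolding weight_def zz_def by simp
  also have "\<dots> \<le> (\<Sum>i\<in>{Suc l..r}. psi w (zz i) - psi w (zz (i - 1)))"
    using step by (intro sum_mono) auto
  also have "\<dots> = psi w (zz r) - psi w (zz l)"
    by (rule sum_telescope''[OF assms(1)])
  also have "psi w (zz r) = psi w y"
    unfolding zz_def by (intro psi_cong) (simp add: range_mat_same mat_vec_idm)
  finally show ?thesis using psi_nonneg[of w "zz l"] by simp
qed

lemma weight_le: "0 < w \<Longrightarrow> l \<le> r \<Longrightarrow> r \<le> n \<Longrightarrow> weight w B l r y \<le> real (w^2) * inf_norm w y"
  using weight_le_psi[of l r y] psi_le[of w y] by linarith

lemma weight_split: assumes "l \<le> m" "m \<le> r"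
  shows "weight w B l r y = weight w B l m (mat_vec w (range_mat w B m r) y) + weight w B m r y"
proof -
  have U: "{Suc l..r} = {Suc l..m} \<union> {Suc m..r}" using assms by auto
  have "weight w B l r y = (\<Sum>i\<in>{Suc l..m}. weight1 w B i (mat_vec w (range_mat w B i r) y))
      + (\<Sum>i\<in>{Suc m..r}. weight1 w B i (mat_vec w (range_mat w B i r) y))"
    unfolding weight_def U by (rule sum.union_disjoint) auto
  also have "(\<Sum>i\<in>{Suc l..m}. weight1 w B i (mat_vec w (range_mat w B i r) y))
     = weight w B l m (mat_vec w (range_mat w B m r) y)"
    unfolding weight_def
  proof (intro sum.cong refl)
    fix i assume "i \<in> {Suc l..m}"
    then have "mat_vec w (range_mat w B i r) y = mat_vec w (range_mat w B i m) (mat_vec w (range_mat w B m r) y)"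
      using assms by (intro range_comp) auto
    then show "weight1 w B i (mat_vec w (range_mat w B i r) y) = weight1 w B i (mat_vec w (range_mat w B i m) (mat_vec w (range_mat w B m r) y))"
      by simp
  qed
  finally show ?thesis unfolding weight_def by simp
qed

lemma contract: assumes "l \<le> m" "m \<le> n" "\<And>v. v < w \<Longrightarrow> \<bar>x v\<bar> \<le> N" "u < w"
  shows "\<bar>mat_vec w (range_mat w B l m) x u\<bar> \<le> N"
  using assms
proof (induction m arbitrary: x rule: dec_induct)
  case base
  then show ?case by (simp add: range_mat_same mat_vec_idm)
next
  case (step q)
  have q: "Suc q \<in> {1..n}" using step by auto
  have "\<bar>mat_vec w (walk_mat B (Suc q)) x v\<bar> \<le> N" if "v < w" for v
  proof -
    have "\<bar>x (B (Suc q) v False)\<bar> \<le> N" "\<bar>x (B (Suc q) v True)\<bar> \<le> N"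
      using step.prems reg_lt[OF reg q that] by auto
    then show ?thesis unfolding walk_apply[OF reg q that] by (simp add: abs_le_iff)
  qed
  note wb = this
  have "\<bar>mat_vec w (range_mat w B l q) (mat_vec w (walk_mat B (Suc q)) x) u\<bar> \<le> N"
  proof (rule step.IH)
    show "\<And>v. v < w \<Longrightarrow> \<bar>mat_vec w (walk_mat B (Suc q)) x v\<bar> \<le> N" by (rule wb)
    show "q \<le> n" using step.hyps step.prems by simp
    show "u < w" using step.prems by simp
  qed
  moreover have "l \<le> q" using step.hyps by simp
  ultimately show ?case by (simp add: range_mat_Suc mat_vec_mult)
qed

end



lemma zeta_aux: "1 \<le> M \<Longrightarrow> (\<Sum>a=1..M. 1 / (real a)^2) \<le> 5/3 - 2 / (2 * real M + 1)"
proof (induction M rule: dec_induct)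
  case base then show ?case by simp
next
  case (step q)
  have e1: "2 / (2 * real q + 1) - 2 / (2 * real (Suc q) + 1) = 4 / ((2 * real q + 1) * (2 * real q + 3))"
    by (simp add: field_simps)
  have e2: "(2 * real q + 1) * (2 * real q + 3) \<le> 4 * (real (Suc q))^2"
    by (simp add: power2_eq_square algebra_simps)
  have e3: "1 / (real (Suc q))^2 = 4 / (4 * (real (Suc q))^2)" by simp
  have "4 / (4 * (real (Suc q))^2) \<le> 4 / ((2 * real q + 1) * (2 * real q + 3))"
    using e2 by (intro divide_left_mono mult_pos_pos) auto
  then have "1 / (real (Suc q))^2 \<le> 2 / (2 * real q + 1) - 2 / (2 * real (Suc q) + 1)"
    using e1 e3 by simp
  then show ?case using step.IH by simp
qed

lemma zeta_bound: "(\<Sum>a=1..M. 1 / (real a)^2) \<le> 5/3"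
proof (cases "M \<ge> 1")
  case True
  then show ?thesis using zeta_aux[OF True] by (smt (verit) divide_nonneg_nonneg of_nat_0_le_iff)
qed simp

lemma pair_ineq: fixes x y :: real assumes "x > 0" "y > 0"
  shows "1 / (x^2 * y^2) \<le> 2 * (1 / x^2 + 1 / y^2) / (x + y)^2"
proof -
  have "(x + y)^2 \<le> 2 * (x^2 + y^2)" using sum_squares_ge_zero[of "x - y" 0]
    by (simp add: power2_eq_square algebra_simps)
  then show ?thesis using assms by (simp add: field_simps)
qed

lemma T_bound: "(\<Sum>i\<in>{0..N}. 1 / ((real i + 1)^2 * (real (N - i) + 1)^2)) \<le> (20/3) / (real N + 2)^2"
proof -
  have "(\<Sum>i\<in>{0..N}. 1 / ((real i + 1)^2 * (real (N - i) + 1)^2))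
     \<le> (\<Sum>i\<in>{0..N}. 2 * (1 / (real i + 1)^2 + 1 / (real (N - i) + 1)^2) / (real N + 2)^2)"
  proof (intro sum_mono)
    fix i assume i: "i \<in> {0..N}"
    have e: "(real i + 1) + (real (N - i) + 1) = real N + 2" using i by auto
    show "1 / ((real i + 1)^2 * (real (N - i) + 1)^2) \<le> 2 * (1 / (real i + 1)^2 + 1 / (real (N - i) + 1)^2) / (real N + 2)^2"
      using pair_ineq[of "real i + 1" "real (N - i) + 1", unfolded e] by simp
  qed
  also have "\<dots> = 2 * ((\<Sum>i\<in>{0..N}. 1 / (real i + 1)^2) + (\<Sum>i\<in>{0..N}. 1 / (real (N - i) + 1)^2)) / (real N + 2)^2"
    by (simp only: sum_divide_distrib[symmetric] sum_distrib_left[symmetric] sum.distrib)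
  also have "(\<Sum>i\<in>{0..N}. 1 / (real (N - i) + 1)^2) = (\<Sum>i\<in>{0..N}. 1 / (real i + 1)^2)"
    by (subst sum.atLeastAtMost_rev) simp
  also have "(\<Sum>i\<in>{0..N}. 1 / (real i + 1)^2) = (\<Sum>a=1..Suc N. 1 / (real a)^2)"
  proof -
    have "(\<Sum>a=1..Suc N. 1 / (real a)^2) = (\<Sum>i\<in>{0..N}. 1 / (real (Suc i))^2)"
      by (subst sum.shift_bounds_cl_Suc_ivl[symmetric]) simp
    then show ?thesis by (simp add: add.commute)
  qed
  also have "2 * ((\<Sum>a=1..Suc N. 1 / (real a)^2) + (\<Sum>a=1..Suc N. 1 / (real a)^2)) / (real N + 2)^2
     \<le> 2 * (5/3 + 5/3) / (real N + 2)^2"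
    using zeta_bound[of "Suc N"] by (intro divide_right_mono) auto
  finally show ?thesis by simp
qed

lemma prod_eps:
  fixes \<gamma> L :: real and eps :: "nat \<Rightarrow> real"
  assumes "L > 0" "\<And>i. eps i = \<gamma> ^ (i + 1) / (10 * real ((i + 1) ^ 2) * L)"
  shows "(\<Sum>i\<in>{0..K}. eps i * eps (K - i)) = \<gamma> ^ (K + 2) / (100 * L^2) *
     (\<Sum>i\<in>{0..K}. 1 / ((real i + 1)^2 * (real (K - i) + 1)^2))"
  unfolding sum_distrib_left
proof (intro sum.cong refl)
  fix i assume i: "i \<in> {0..K}"
  have g: "\<gamma> ^ (i + 1) * \<gamma> ^ (K - i + 1) = \<gamma> ^ (K + 2)"
    using i by (simp add: power_add[symmetric])
  have "eps i * eps (K - i) = (\<gamma> ^ (i + 1) * \<gamma> ^ (K - i + 1)) / (100 * L^2 * ((real i + 1)^2 * (real (K - i) + 1)^2))"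
    unfolding assms(2) by (simp add: power2_eq_square field_simps)
  then show "eps i * eps (K - i) = \<gamma> ^ (K + 2) / (100 * L^2) * (1 / ((real i + 1)^2 * (real (K - i) + 1)^2))"
    unfolding g by simp
qed

lemma X_bound:
  fixes \<gamma> L :: real and eps :: "nat \<Rightarrow> real"
  assumes g: "0 < \<gamma>" "\<gamma> < 1/2" and L: "L > 0"
    and e: "\<And>i. eps i = \<gamma> ^ (i + 1) / (10 * real ((i + 1) ^ 2) * L)"
  shows "(\<Sum>i\<in>{0..Suc k}. eps i * eps (Suc k - i)) + (\<Sum>i\<in>{0..k}. eps i * eps (k - i)) \<le> eps (Suc k) / L"
proof -
  define c where "c = \<gamma> ^ (k + 2) / (100 * L^2)"
  have c0: "c \<ge> 0" unfolding c_def using g by simp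
  have A: "(\<Sum>i\<in>{0..Suc k}. eps i * eps (Suc k - i)) \<le> c * \<gamma> * ((20/3) / (real k + 3)^2)"
  proof -
    have "(\<Sum>i\<in>{0..Suc k}. eps i * eps (Suc k - i)) = c * \<gamma> *
      (\<Sum>i\<in>{0..Suc k}. 1 / ((real i + 1)^2 * (real (Suc k - i) + 1)^2))"
      unfolding prod_eps[OF L e] c_def by (simp add: field_simps)
    also have "\<dots> \<le> c * \<gamma> * ((20/3) / (real (Suc k) + 2)^2)"
      using c0 g by (intro mult_left_mono T_bound) auto
    finally show ?thesis by (simp add: add.commute)
  qed
  have B: "(\<Sum>i\<in>{0..k}. eps i * eps (k - i)) \<le> c * ((20/3) / (real k + 2)^2)"
    unfolding prod_eps[OF L e] c_def[symmetric]
    using c0 by (intro mult_left_mono T_bound) auto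
  have C: "c * \<gamma> * ((20/3) / (real k + 3)^2) \<le> c * (1/2) * ((20/3) / (real k + 2)^2)"
  proof -
    have "(20/3) / (real k + 3)^2 \<le> (20/3) / (real k + 2)^2"
      by (intro divide_left_mono power_mono mult_pos_pos) auto
    moreover have "c * \<gamma> \<le> c * (1/2)" using c0 g by (intro mult_left_mono) auto
    ultimately show ?thesis using c0 g by (intro mult_mono) auto
  qed
  have D: "eps (Suc k) / L = c * (10 / (real k + 2)^2)"
    unfolding e c_def by (simp add: field_simps power2_eq_square)
  show ?thesis using A B C D by simp
qed


lemma powr_bound: fixes L t :: real assumes "L > 0" "0 \<le> t" "t \<le> L"
  shows "(1 + 1/L) powr t \<le> 3"
proof -
  have "(1 + 1/L) powr t \<le> (1 + 1/L) powr L"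
    using assms by (intro powr_mono) auto
  also have "\<dots> = exp (L * ln (1 + 1/L))"
  proof -
    have "0 < 1/L" using assms by simp
    then have "1 + 1/L \<noteq> 0" by linarith
    then show ?thesis by (simp add: powr_def)
  qed
  also have "\<dots> \<le> exp (L * (1/L))"
    using assms ln_add_one_self_le_self[of "1/L"] by (intro exp_mono mult_left_mono) auto
  also have "\<dots> = exp 1" using assms by simp
  also have "\<dots> \<le> 3" by (rule exp_le)
  finally show ?thesis .
qed

lemma mat_vec_sum: "mat_vec w (\<lambda>u v. \<Sum>i\<in>I. X i u v) y u = (\<Sum>i\<in>I. mat_vec w (X i) y u)"
  unfolding mat_vec_def by (simp add: sum_distrib_right sum.swap[of _ I])

lemma telescope_alg:
  fixes c :: real and h g :: "nat \<Rightarrow> real" and e :: "nat \<Rightarrow> nat \<Rightarrow> real"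
  shows "(\<Sum>i\<in>{0..Suc k}. c + h i + g (Suc k - i) + e i (Suc k - i))
       - (\<Sum>i\<in>{0..k}. c + h i + g (k - i) + e i (k - i)) - c
     = h (Suc k) + g (Suc k) + (\<Sum>i\<in>{0..Suc k}. e i (Suc k - i)) - (\<Sum>i\<in>{0..k}. e i (k - i))"
proof -
  have r1: "(\<Sum>i\<in>{0..Suc k}. g (Suc k - i)) = (\<Sum>i\<in>{0..Suc k}. g i)"
    using sum.atLeastAtMost_rev[of g 0 "Suc k", unfolded add_0_right] by (rule sym)
  have r2: "(\<Sum>i\<in>{0..k}. g (k - i)) = (\<Sum>i\<in>{0..k}. g i)"
    using sum.atLeastAtMost_rev[of g 0 k, unfolded add_0_right] by (rule sym)
  show ?thesis
    by (simp only: sum.distrib r1 r2) (simp add: algebra_simps)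
qed


context
  fixes n w d0 :: nat and B :: "nat \<Rightarrow> nat \<Rightarrow> bool \<Rightarrow> nat" and G0 :: "bool list \<Rightarrow> bool list"
    and \<gamma> :: real and eps :: "nat \<Rightarrow> real"
  assumes w_pos: "0 < w" and reg: "regular_robp n w B" and n_ge2: "n \<ge> 2"
    and gamma: "0 < \<gamma>" "\<gamma> < 1 / 2"
    and eps_def: "\<And>i. eps i = \<gamma> ^ (i + 1) / (10 * real ((i + 1) ^ 2) * log 2 (real n))"
    and G0_good: "\<And>l r y. l < r \<Longrightarrow> r \<le> n \<Longrightarrow>
        inf_norm w (mat_vec w (\<lambda>u v. seed_avg w B d0 G0 l r u v - range_mat w B l r u v) y)
          \<le> (eps 0 / (3 * real (w ^ 2))) * weight w B l r y"
begin

abbreviation "LL \<equiv> log 2 (real n)"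
abbreviation "aa \<equiv> 1 + 1 / LL"
abbreviation "MM k l r \<equiv> Mrec w B (seed_avg w B d0 G0) k l r"
abbreviation "Err k l r z \<equiv> mat_vec w (\<lambda>u v. MM k l r u v - range_mat w B l r u v) z"
abbreviation "RM l r z \<equiv> mat_vec w (range_mat w B l r) z"

lemma LL_ge1: "LL \<ge> 1"
proof -
  have "log 2 (real 2) \<le> LL" using n_ge2 by (subst log_le_cancel_iff) auto
  then show ?thesis by simp
qed

lemma eps_nonneg: "eps k \<ge> 0"
  unfolding eps_def using gamma LL_ge1 by (intro divide_nonneg_nonneg mult_nonneg_nonneg) auto

lemma Err_single: "u < w \<Longrightarrow> Err k l (Suc l) y u = 0"
  by (subst Mrec.simps) (simp add: mat_vec_diff range_one)

lemma expand:
  "mat_vec w (MM i l m) (mat_vec w (MM j m r) y) u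
   = RM l m (RM m r y) u + Err i l m (RM m r y) u + RM l m (Err j m r y) u + Err i l m (Err j m r y) u"
proof -
  have sp: "mat_vec w (MM j m r) y = (\<lambda>v. RM m r y v + Err j m r y v)"
    by (rule ext) (simp add: mat_vec_diff)
  have sp2: "mat_vec w (MM i l m) z u = RM l m z u + Err i l m z u" for z
    by (simp add: mat_vec_diff)
  show ?thesis unfolding sp mat_vec_add_vec sp2 by simp
qed

lemma C_le1: assumes "2 ^ Suc t \<le> n" shows "aa powr real t / 3 \<le> 1"
proof -
  have "real (Suc t) = log 2 (real (2 ^ Suc t))" by (rule log2_of_power_eq) simp
  also have "\<dots> \<le> LL"
  proof (rule log_mono)
    show "real (2 ^ Suc t) \<le> real n" using assms by (simp only: of_nat_le_iff)
  qed simp_all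
  finally have "real t \<le> LL" by simp
  then have "aa powr real t \<le> 3" using LL_ge1 by (intro powr_bound) auto
  then show ?thesis by simp
qed

lemma main: "(i + 1) * 2 ^ t \<le> n \<Longrightarrow>
  inf_norm w (Err k (i * 2 ^ t) (i * 2 ^ t + 2 ^ t) y)
    \<le> (aa powr real t / 3) * eps k * (weight w B (i * 2 ^ t) (i * 2 ^ t + 2 ^ t) y / real (w ^ 2))"
proof (induction t arbitrary: i k y)
  case 0
  have "inf_norm w (Err k i (Suc i) y) \<le> 0"
    using w_pos Err_single by (intro inf_norm_le) auto
  moreover have "0 \<le> (aa powr real 0 / 3) * eps k * (weight w B i (Suc i) y / real (w ^ 2))"
    using eps_nonneg weight_nonneg[OF reg] by (intro mult_nonneg_nonneg divide_nonneg_nonneg) auto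
  ultimately show ?case by simp
next
  case (Suc t)
  define l where "l = i * 2 ^ Suc t"
  define m where "m = l + 2 ^ t"
  define r where "r = l + 2 ^ Suc t"
  have lE: "l = (2 * i) * 2 ^ t" unfolding l_def by simp
  have mE: "m = (2 * i + 1) * 2 ^ t" unfolding m_def l_def by (simp add: algebra_simps)
  have mE2: "m = (2 * i) * 2 ^ t + 2 ^ t" unfolding m_def lE ..
  have rE: "r = (2 * i + 1) * 2 ^ t + 2 ^ t" unfolding r_def l_def by (simp add: algebra_simps)
  have rn: "r \<le> n" using Suc.prems unfolding r_def l_def by (simp add: algebra_simps)
  have lm: "l \<le> m" "m \<le> r" "m \<le> n" unfolding m_def r_def using rn by (auto simp: r_def)
  have mid: "(l + r) div 2 = m" unfolding m_def r_def by simp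
  have len: "\<not> r - l \<le> 1"
  proof -
    have a: "(1::nat) \<le> 2 ^ t" by simp
    have b: "r - l = 2 * 2 ^ t" unfolding r_def by simp
    show ?thesis using a b by linarith
  qed
  define C where "C = aa powr real t / 3"
  have C0: "C \<ge> 0" unfolding C_def by simp
  have C1: "C \<le> 1" unfolding C_def
    using C_le1[of t] Suc.prems by (simp add: algebra_simps)
  have IHL: "inf_norm w (Err j l m z) \<le> C * eps j * (weight w B l m z / real (w ^ 2))" for j z
    using Suc.IH[of "2 * i" j z] Suc.prems unfolding C_def lE mE2 by (simp add: algebra_simps)
  have IHR: "inf_norm w (Err j m r z) \<le> C * eps j * (weight w B m r z / real (w ^ 2))" for j z
    using Suc.IH[of "2 * i + 1" j z] Suc.prems unfolding C_def mE rE by (simp add: algebra_simps)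
  have w2: "real (w ^ 2) > 0" using w_pos by simp
  have aa_pos: "aa \<ge> 1" using LL_ge1 by simp
  have aaC: "aa powr real (Suc t) / 3 = C * aa"
    unfolding C_def using aa_pos by (simp add: powr_add)
  have lr: "l < r" unfolding r_def by simp
  have goal: "inf_norm w (Err k l r y) \<le> (aa powr real (Suc t) / 3) * eps k * (weight w B l r y / real (w ^ 2))"
  proof (cases k)
    case 0
    have M0: "MM 0 l r = seed_avg w B d0 G0 l r" by (subst Mrec.simps) (use len in simp)
    have "inf_norm w (Err 0 l r y) \<le> (eps 0 / (3 * real (w ^ 2))) * weight w B l r y"
      using G0_good[OF lr rn, of y] unfolding M0 .
    also have "\<dots> = (1 / 3) * eps 0 * (weight w B l r y / real (w ^ 2))" by simp
    also have "\<dots> \<le> (aa powr real (Suc t) / 3) * eps 0 * (weight w B l r y / real (w ^ 2))"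
    proof (intro mult_right_mono divide_right_mono)
      show "1 \<le> aa powr real (Suc t)" using aa_pos by (intro ge_one_powr_ge_zero) auto
    qed (use eps_nonneg weight_nonneg[OF reg] w2 in auto)
    finally show ?thesis using 0 by simp
  next
    case (Suc k')
    define e where "e = eps (Suc k')"
    define Y where "Y = RM m r y"
    define P where "P = weight w B l m Y / real (w ^ 2)"
    define Q where "Q = weight w B m r y / real (w ^ 2)"
    have P0: "P \<ge> 0" unfolding P_def using weight_nonneg[OF reg] w2 by simp
    have Q0: "Q \<ge> 0" unfolding Q_def using weight_nonneg[OF reg] w2 by simp
    have e0: "e \<ge> 0" unfolding e_def by (rule eps_nonneg)
    have WPQ: "weight w B l r y / real (w ^ 2) = P + Q"
      unfolding P_def Q_def Y_def weight_split[OF reg lm(1,2)] by (simp add: add_divide_distrib)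
    define X where "X = (\<Sum>i\<in>{0..Suc k'}. eps i * eps (Suc k' - i)) + (\<Sum>i\<in>{0..k'}. eps i * eps (k' - i))"
    have X0: "X \<ge> 0" unfolding X_def using eps_nonneg by (intro add_nonneg_nonneg sum_nonneg mult_nonneg_nonneg) auto
    have Xb: "X \<le> e / LL" unfolding X_def e_def
      using X_bound[OF gamma _ eps_def] LL_ge1 by simp
    have Mr: "MM (Suc k') l r = (\<lambda>u v. (\<Sum>i\<in>{0..Suc k'}. mat_mult w (MM i l m) (MM (Suc k' - i) m r) u v)
        - (\<Sum>i\<in>{0..k'}. mat_mult w (MM i l m) (MM (k' - i) m r) u v))"
      by (subst Mrec.simps) (use len mid in simp)
    have bF: "inf_norm w (Err j m r y) \<le> C * eps j * Q" for j
      using IHR[of j y] unfolding Q_def by simp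
    have be: "\<bar>Err i l m (Err j m r y) u\<bar> \<le> C * C * (eps i * eps j) * Q" if u: "u < w" for i j u
    proof -
      have "\<bar>Err i l m (Err j m r y) u\<bar> \<le> inf_norm w (Err i l m (Err j m r y))"
        by (rule inf_norm_ge[OF w_pos u])
      also have "\<dots> \<le> C * eps i * (weight w B l m (Err j m r y) / real (w ^ 2))" by (rule IHL)
      also have "\<dots> \<le> C * eps i * inf_norm w (Err j m r y)"
      proof (intro mult_left_mono)
        show "weight w B l m (Err j m r y) / real (w ^ 2) \<le> inf_norm w (Err j m r y)"
          using weight_le[OF reg w_pos lm(1) lm(3), of "Err j m r y"] by (simp only: pos_divide_le_eq[OF w2] mult.commute)
      qed (use C0 eps_nonneg in auto)
      also have "\<dots> \<le> C * eps i * (C * eps j * Q)"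
        using bF[of j] C0 eps_nonneg[of i] by (intro mult_left_mono) auto
      finally show ?thesis by (simp add: algebra_simps)
    qed
    have sumb: "\<bar>\<Sum>i\<in>{0..K}. Err i l m (Err (K - i) m r y) u\<bar> \<le> C * C * (\<Sum>i\<in>{0..K}. eps i * eps (K - i)) * Q"
      if u: "u < w" for K u
    proof -
      have "\<bar>\<Sum>i\<in>{0..K}. Err i l m (Err (K - i) m r y) u\<bar> \<le> (\<Sum>i\<in>{0..K}. \<bar>Err i l m (Err (K - i) m r y) u\<bar>)"
        by (rule sum_abs)
      also have "\<dots> \<le> (\<Sum>i\<in>{0..K}. C * C * (eps i * eps (K - i)) * Q)"
        using be[OF u] by (intro sum_mono) auto
      also have "\<dots> = C * C * (\<Sum>i\<in>{0..K}. eps i * eps (K - i)) * Q"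
        by (simp add: sum_distrib_left sum_distrib_right)
      finally show ?thesis .
    qed
    have pt: "\<bar>Err (Suc k') l r y u\<bar> \<le> C * aa * e * (P + Q)" if u: "u < w" for u
    proof -
      have E1: "Err (Suc k') l r y u =
          (\<Sum>i\<in>{0..Suc k'}. mat_vec w (MM i l m) (mat_vec w (MM (Suc k' - i) m r) y) u)
        - (\<Sum>i\<in>{0..k'}. mat_vec w (MM i l m) (mat_vec w (MM (k' - i) m r) y) u)
        - RM l m (RM m r y) u"
        unfolding mat_vec_diff Mr mat_vec_sum mat_vec_mult range_comp[OF lm(1,2)] ..
      have E2a: "Err (Suc k') l r y u = Err (Suc k') l m (RM m r y) u + RM l m (Err (Suc k') m r y) u
          + (\<Sum>i\<in>{0..Suc k'}. Err i l m (Err (Suc k' - i) m r y) u) - (\<Sum>i\<in>{0..k'}. Err i l m (Err (k' - i) m r y) u)"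
        unfolding E1 expand
        by (rule telescope_alg[where c="RM l m (RM m r y) u" and h="\<lambda>i. Err i l m (RM m r y) u" and g="\<lambda>j. RM l m (Err j m r y) u" and e="\<lambda>i j. Err i l m (Err j m r y) u" and k=k'])
      define h where "h i = Err i l m Y u" for i
      define g where "g j = RM l m (Err j m r y) u" for j
      define ee where "ee i j = Err i l m (Err j m r y) u" for i j
      have E2: "Err (Suc k') l r y u = h (Suc k') + g (Suc k') + (\<Sum>i\<in>{0..Suc k'}. ee i (Suc k' - i)) - (\<Sum>i\<in>{0..k'}. ee i (k' - i))"
        unfolding h_def g_def ee_def Y_def by (rule E2a)
      have bh: "\<bar>h (Suc k')\<bar> \<le> C * e * P"
        unfolding h_def e_def P_def using inf_norm_ge[OF w_pos u] IHL[of "Suc k'" Y] by (meson order_trans)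
      have bg: "\<bar>g (Suc k')\<bar> \<le> C * e * Q"
      proof -
        have "\<bar>g (Suc k')\<bar> \<le> inf_norm w (Err (Suc k') m r y)"
          unfolding g_def using contract[OF reg lm(1) lm(3) _ u] inf_norm_ge[OF w_pos] by blast
        then show ?thesis using bF[of "Suc k'"] unfolding e_def by linarith
      qed
      have b1: "\<bar>\<Sum>i\<in>{0..Suc k'}. ee i (Suc k' - i)\<bar> \<le> C * C * (\<Sum>i\<in>{0..Suc k'}. eps i * eps (Suc k' - i)) * Q"
        unfolding ee_def by (rule sumb[OF u])
      have b2: "\<bar>\<Sum>i\<in>{0..k'}. ee i (k' - i)\<bar> \<le> C * C * (\<Sum>i\<in>{0..k'}. eps i * eps (k' - i)) * Q"
        unfolding ee_def by (rule sumb[OF u])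
      have "\<bar>Err (Suc k') l r y u\<bar> \<le> C * e * P + C * e * Q + C * C * X * Q"
        unfolding E2 X_def using bh bg b1 b2 by (simp add: algebra_simps)
      also have "C * C * X * Q \<le> C * (e / LL) * (P + Q)"
      proof -
        have "C * X \<le> e / LL" using mult_left_le_one_le[OF X0 C0 C1] Xb by linarith
        then have "C * (C * X) \<le> C * (e / LL)" using C0 by (rule mult_left_mono)
        then have "C * (C * X) * Q \<le> C * (e / LL) * Q" using Q0 by (rule mult_right_mono)
        then have "C * C * X * Q \<le> C * (e / LL) * Q" by (simp only: mult.assoc)
        also have "\<dots> \<le> C * (e / LL) * (P + Q)"
          using P0 C0 e0 LL_ge1 by (intro mult_left_mono) auto
        finally show ?thesis .
      qed
      also have "C * e * P + C * e * Q + C * (e / LL) * (P + Q) = C * aa * e * (P + Q)"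
        by (simp add: algebra_simps add_divide_distrib)
      finally show ?thesis by simp
    qed
    have "inf_norm w (Err (Suc k') l r y) \<le> C * aa * e * (P + Q)"
      using w_pos pt by (intro inf_norm_le) auto
    then show ?thesis unfolding Suc aaC WPQ e_def by (simp add: algebra_simps)
  qed
  then show ?case unfolding l_def r_def by simp
qed

end

theorem lemma3p7:
  fixes n w d0 :: nat
    and B :: "nat \<Rightarrow> nat \<Rightarrow> bool \<Rightarrow> nat"
    and G0 :: "bool list \<Rightarrow> bool list"
    and \<gamma> :: real
    and eps :: "nat \<Rightarrow> real"
  assumes w_pos: "0 < w"
    and reg: "regular_robp n w B"
    and n_pow2: "\<exists>p. n = 2 ^ p"
    and n_ge2: "n \<ge> 2"
    and gamma: "0 < \<gamma>" "\<gamma> < 1 / 2"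
    and eps_def: "\<And>i. eps i = \<gamma> ^ (i + 1) / (10 * real ((i + 1) ^ 2) * log 2 (real n))"
    and G0_len: "\<And>s. length s = d0 \<Longrightarrow> length (G0 s) = n"
    and G0_good: "\<And>l r y. l < r \<Longrightarrow> r \<le> n \<Longrightarrow>
        inf_norm w (mat_vec w (\<lambda>u v. seed_avg w B d0 G0 l r u v - range_mat w B l r u v) y)
          \<le> (eps 0 / (3 * real (w ^ 2))) * weight w B l r y"
  shows "\<forall>k l r. in_BS n l r \<longrightarrow> (\<forall>y.
        inf_norm w (mat_vec w (\<lambda>u v. Mrec w B (seed_avg w B d0 G0) k l r u v - range_mat w B l r u v) y)
          \<le> ((1 + 1 / log 2 (real n)) powr log 2 (real (r - l)) / 3) * eps k
             * (weight w B l r y / real (w ^ 2)))"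
  proof (intro allI impI)
  fix k l r y
  assume bs: "in_BS n l r"
  then obtain i t where lr: "l = i * 2 ^ t" "r = l + 2 ^ t" "r \<le> n" unfolding in_BS_def by blast
  have n: "(i + 1) * 2 ^ t \<le> n" using lr by (simp add: algebra_simps)
  have d: "r - l = 2 ^ t" using lr(2) by simp
  have lg: "log 2 (real (r - l)) = real t" unfolding d by (rule log2_of_power_eq[symmetric]) simp
  note M = main[OF w_pos reg n_ge2 gamma(1) gamma(2) eps_def G0_good n, of k y]
  show "inf_norm w (mat_vec w (\<lambda>u v. Mrec w B (seed_avg w B d0 G0) k l r u v - range_mat w B l r u v) y)
          \<le> ((1 + 1 / log 2 (real n)) powr log 2 (real (r - l)) / 3) * eps k
             * (weight w B l r y / real (w ^ 2))"
    unfolding lg using M unfolding lr(1)[symmetric] lr(2)[symmetric] .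
qed

end
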